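(* Every continuous valuation on Johnstone's dcpo $\mathcal J$ (with its Scott topology) is point-continuous.
   Context: Johnstone's dcpo: $\mathcal J=\mathbb N\times(\mathbb N\cup\{\infty\})$ ordered by $(a,b)\le(c,d)$ iff either ($a=c$ and $b\le d$) or ($d=\infty$ and $b\le c$). A continuous valuation is a map $\nu:\mathcal OX\to[0,\infty]$ with $\nu(\emptyset)=0$, monotone, modular, and preserving directed suprema of opens. It is point-continuous if for every open $U$ and every real $r$ with $0\le r<\nu(U)$ there is a finite $A\subseteq U$ such that $\nu(V)>r$ for every open $V\supseteq A$. *)

theory Defs
  imports "HOL-Library.Extended_Nat" "HOL-Library.Extended_Nonnegative_Real"
begin

text \<open>Johnstone's dcpo: carrier nat \<times> enat (enat = nat extended by \<infinity>).\<close>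

type_synonym jpt = "nat \<times> enat"

definition jle :: "jpt \<Rightarrow> jpt \<Rightarrow> bool" where
  "jle p q \<longleftrightarrow> (case p of (a, b) \<Rightarrow> case q of (c, d) \<Rightarrow>
      (a = c \<and> b \<le> d) \<or> (d = \<infinity> \<and> b \<le> enat c))"

definition directed_rel :: "('a \<Rightarrow> 'a \<Rightarrow> bool) \<Rightarrow> 'a set \<Rightarrow> bool" where
  "directed_rel le D \<longleftrightarrow> D \<noteq> {} \<and> (\<forall>x\<in>D. \<forall>y\<in>D. \<exists>z\<in>D. le x z \<and> le y z)"

definition is_lub_rel :: "('a \<Rightarrow> 'a \<Rightarrow> bool) \<Rightarrow> 'a set \<Rightarrow> 'a \<Rightarrow> bool" where
  "is_lub_rel le D s \<longleftrightarrow> (\<forall>x\<in>D. le x s) \<and> (\<forall>u. (\<forall>x\<in>D. le x u) \<longrightarrow> le s u)"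

definition scott_open :: "('a \<Rightarrow> 'a \<Rightarrow> bool) \<Rightarrow> 'a set \<Rightarrow> bool" where
  "scott_open le U \<longleftrightarrow>
     (\<forall>x y. x \<in> U \<and> le x y \<longrightarrow> y \<in> U) \<and>
     (\<forall>D s. directed_rel le D \<and> is_lub_rel le D s \<and> s \<in> U \<longrightarrow> D \<inter> U \<noteq> {})"

definition continuous_valuation :: "('a set \<Rightarrow> bool) \<Rightarrow> ('a set \<Rightarrow> ennreal) \<Rightarrow> bool" where
  "continuous_valuation opn \<nu> \<longleftrightarrow>
     \<nu> {} = 0 \<and>
     (\<forall>U V. opn U \<and> opn V \<and> U \<subseteq> V \<longrightarrow> \<nu> U \<le> \<nu> V) \<and>
     (\<forall>U V. opn U \<and> opn V \<longrightarrow> \<nu> U + \<nu> V = \<nu> (U \<union> V) + \<nu> (U \<inter> V)) \<and>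
     (\<forall>\<D>. \<D> \<noteq> {} \<and> (\<forall>U\<in>\<D>. opn U) \<and>
           (\<forall>U\<in>\<D>. \<forall>V\<in>\<D>. \<exists>W\<in>\<D>. U \<subseteq> W \<and> V \<subseteq> W)
        \<longrightarrow> \<nu> (\<Union>\<D>) = (SUP U\<in>\<D>. \<nu> U))"

definition point_continuous :: "('a set \<Rightarrow> bool) \<Rightarrow> ('a set \<Rightarrow> ennreal) \<Rightarrow> bool" where
  "point_continuous opn \<nu> \<longleftrightarrow>
     (\<forall>U (r::real). opn U \<and> 0 \<le> r \<and> ennreal r < \<nu> U \<longrightarrow>
        (\<exists>A. finite A \<and> A \<subseteq> U \<and> (\<forall>V. opn V \<and> A \<subseteq> V \<longrightarrow> ennreal r < \<nu> V)))"

end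

theory Submission
  imports Defs
begin

lemma so_upper: "scott_open le U \<Longrightarrow> x \<in> U \<Longrightarrow> le x y \<Longrightarrow> y \<in> U"
  unfolding scott_open_def by blast

lemma so_inacc: "scott_open le U \<Longrightarrow> directed_rel le D \<Longrightarrow> is_lub_rel le D s \<Longrightarrow> s \<in> U
   \<Longrightarrow> \<exists>d\<in>D. d \<in> U"
  unfolding scott_open_def by blast

lemma so_Int:
  assumes U: "scott_open le U" and V: "scott_open le V"
  shows "scott_open le (U \<inter> V)"
  unfolding scott_open_def
proof (intro conjI allI impI)
  fix x y assume "x \<in> U \<inter> V \<and> le x y"
  then show "y \<in> U \<inter> V" using so_upper[OF U] so_upper[OF V] by blast
next
  fix D s assume h: "directed_rel le D \<and> is_lub_rel le D s \<and> s \<in> U \<inter> V"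
  then obtain a b where a: "a \<in> D" "a \<in> U" and b: "b \<in> D" "b \<in> V"
    using so_inacc[OF U] so_inacc[OF V] by blast
  then obtain z where "z \<in> D" "le a z" "le b z"
    using h unfolding directed_rel_def by blast
  then show "D \<inter> (U \<inter> V) \<noteq> {}" using a b so_upper[OF U] so_upper[OF V] by blast
qed

lemma general_pc:
  fixes le :: "'a \<Rightarrow> 'a \<Rightarrow> bool" and F :: "nat \<Rightarrow> 'a set"
  assumes cv: "continuous_valuation (scott_open le) \<nu>"
    and fin: "\<And>k. finite (F k)" and mon: "\<And>k j. k \<le> j \<Longrightarrow> F k \<subseteq> F j"
    and cov: "\<And>x. \<exists>k. x \<in> F k"
  shows "point_continuous (scott_open le) \<nu>"
  unfolding point_continuous_def
proof (intro allI impI)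
  fix U :: "'a set" and r :: real
  assume "scott_open le U \<and> 0 \<le> r \<and> ennreal r < \<nu> U"
  then have U: "scott_open le U" and rU: "ennreal r < \<nu> U" by auto
  show "\<exists>A. finite A \<and> A \<subseteq> U \<and> (\<forall>V. scott_open le V \<and> A \<subseteq> V \<longrightarrow> ennreal r < \<nu> V)"
  proof (rule ccontr)
    assume nt: "\<not> ?thesis"
    have "\<forall>k. \<exists>V. scott_open le V \<and> U \<inter> F k \<subseteq> V \<and> \<nu> V \<le> ennreal r"
    proof
      fix k
      have "finite (U \<inter> F k)" using fin by auto
      then show "\<exists>V. scott_open le V \<and> U \<inter> F k \<subseteq> V \<and> \<nu> V \<le> ennreal r"
        using nt by (metis inf_le1 not_less)
    qed
    then obtain V where Vo: "\<And>k. scott_open le (V k)" and VF: "\<And>k. U \<inter> F k \<subseteq> V k"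
      and Vr: "\<And>k. \<nu> (V k) \<le> ennreal r" by metis
    define W where "W k = V k \<inter> U" for k
    define X where "X k = (\<Inter>j\<in>{k..}. W j)" for k
    have Wo: "scott_open le (W k)" for k unfolding W_def using so_Int[OF Vo U] .
    have WU: "W k \<subseteq> U" for k unfolding W_def by auto
    have FW: "x \<in> U \<Longrightarrow> x \<in> F K \<Longrightarrow> K \<le> j \<Longrightarrow> x \<in> W j" for x K j
      using mon[of K j] VF[of j] unfolding W_def by blast
    have XW: "X k \<subseteq> W k" for k unfolding X_def by auto
    have Xo: "scott_open le (X k)" for k
      unfolding scott_open_def
    proof (intro conjI allI impI)
      fix x y assume "x \<in> X k \<and> le x y"
      then show "y \<in> X k" unfolding X_def using so_upper[OF Wo] by blast
    next
      fix D s assume h: "directed_rel le D \<and> is_lub_rel le D s \<and> s \<in> X k"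
      have sW: "s \<in> W j" if "k \<le> j" for j using h that unfolding X_def by auto
      have "s \<in> U" using h XW WU by blast
      then obtain d where d: "d \<in> D" "d \<in> U" using so_inacc[OF U] h by blast
      obtain K where K: "d \<in> F K" using cov by blast
      have P: "\<exists>e\<in>D. \<forall>j\<ge>k. (j < k + n \<or> K \<le> j) \<longrightarrow> e \<in> W j" for n
      proof (induction n)
        case 0
        then show ?case using d K FW by auto
      next
        case (Suc n)
        then obtain e where e: "e \<in> D" "\<forall>j\<ge>k. (j < k + n \<or> K \<le> j) \<longrightarrow> e \<in> W j" by blast
        obtain d' where d': "d' \<in> D" "d' \<in> W (k+n)"
          using so_inacc[OF Wo, of D s "k+n"] h sW[of "k+n"] by auto
        obtain z where z: "z \<in> D" "le e z" "le d' z"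
          using h e(1) d'(1) unfolding directed_rel_def by blast
        have "\<forall>j\<ge>k. (j < k + Suc n \<or> K \<le> j) \<longrightarrow> z \<in> W j"
        proof (intro allI impI)
          fix j assume j: "k \<le> j" "j < k + Suc n \<or> K \<le> j"
          show "z \<in> W j"
          proof (cases "j = k + n")
            case True
            then show ?thesis using d' z so_upper[OF Wo] by blast
          next
            case False
            then have "e \<in> W j" using e j by auto
            then show ?thesis using z so_upper[OF Wo] by blast
          qed
        qed
        then show ?case using z by blast
      qed
      obtain e where e: "e \<in> D" "\<forall>j\<ge>k. (j < k + K \<or> K \<le> j) \<longrightarrow> e \<in> W j"
        using P[of K] by blast
      have "e \<in> X k" unfolding X_def using e(2) by force
      then show "D \<inter> X k \<noteq> {}" using e(1) by blast
    qed
    have Xmono: "k \<le> j \<Longrightarrow> X k \<subseteq> X j" for k j unfolding X_def by auto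
    have Xun: "\<Union>(range X) = U"
    proof
      show "\<Union>(range X) \<subseteq> U" using XW WU by blast
      show "U \<subseteq> \<Union>(range X)"
      proof
        fix x assume "x \<in> U"
        obtain K where "x \<in> F K" using cov by blast
        then have "x \<in> X K" unfolding X_def using FW \<open>x \<in> U\<close> by auto
        then show "x \<in> \<Union>(range X)" by blast
      qed
    qed
    have dir: "range X \<noteq> {} \<and> (\<forall>Y\<in>range X. scott_open le Y) \<and>
       (\<forall>Y\<in>range X. \<forall>Z\<in>range X. \<exists>T\<in>range X. Y \<subseteq> T \<and> Z \<subseteq> T)"
    proof (intro conjI ballI)
      show "range X \<noteq> {}" by simp
      show "Y \<in> range X \<Longrightarrow> scott_open le Y" for Y using Xo by auto
      fix Y Z assume "Y \<in> range X" "Z \<in> range X"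
      then obtain a b where "Y = X a" "Z = X b" by auto
      then show "\<exists>T\<in>range X. Y \<subseteq> T \<and> Z \<subseteq> T"
        using Xmono[of a "max a b"] Xmono[of b "max a b"] by auto
    qed
    have "\<nu> U = (SUP Y\<in>range X. \<nu> Y)"
      using cv dir Xun unfolding continuous_valuation_def by metis
    also have "\<dots> \<le> ennreal r"
    proof (rule SUP_least)
      fix Y assume "Y \<in> range X"
      then obtain k where Y: "Y = X k" by auto
      have mono: "\<forall>U V. scott_open le U \<and> scott_open le V \<and> U \<subseteq> V \<longrightarrow> \<nu> U \<le> \<nu> V"
        using cv unfolding continuous_valuation_def by blast
      have "\<nu> (X k) \<le> \<nu> (W k)" using mono Xo Wo XW by blast
      also have "\<dots> \<le> \<nu> (V k)" using mono Wo Vo unfolding W_def by blast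
      finally show "\<nu> Y \<le> ennreal r" using Vr Y order_trans by blast
    qed
    finally show False using rU by simp
  qed
qed

theorem corollary3p10:
  fixes \<nu> :: "jpt set \<Rightarrow> ennreal"
  assumes "continuous_valuation (scott_open jle) \<nu>"
  shows "point_continuous (scott_open jle) \<nu>"
proof (rule general_pc[OF assms, where F = "\<lambda>k. {..k} \<times> insert \<infinity> (enat ` {..k})"])
  show "finite ({..k} \<times> insert \<infinity> (enat ` {..k}))" for k by auto
  show "k \<le> j \<Longrightarrow> {..k} \<times> insert \<infinity> (enat ` {..k}) \<subseteq> {..j} \<times> insert \<infinity> (enat ` {..j})" for k j
    by auto
  show "\<exists>k. x \<in> {..k} \<times> insert \<infinity> (enat ` {..k})" for x :: jpt
  proof (cases x)
    case (Pair a b)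
    show ?thesis
    proof (cases b)
      case (enat n)
      then show ?thesis using Pair by (intro exI[of _ "max a n"]) auto
    next
      case infinity
      then show ?thesis using Pair by auto
    qed
  qed
qed

end
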